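(* Let $G$ be a finite dihedral group generated by two involutions $a$ and $b$. Then there is a conjugate $b'=c^{-1}bc$ ($c\in G$) of $b$ such that $a$ and $b'$ generate a Sylow $2$-subgroup of $G$. *)

theory Defs
  imports "HOL-Algebra.Algebra" "HOL-Computational_Algebra.Primes"
begin

definition involution :: "('a, 'b) monoid_scheme \<Rightarrow> 'a \<Rightarrow> bool" where
  "involution G x \<longleftrightarrow> x \<in> carrier G \<and> x \<noteq> \<one>\<^bsub>G\<^esub> \<and> x \<otimes>\<^bsub>G\<^esub> x = \<one>\<^bsub>G\<^esub>"

definition finite_dihedral_group :: "('a, 'b) monoid_scheme \<Rightarrow> bool" where
  "finite_dihedral_group G \<longleftrightarrow> group G \<and> finite (carrier G) \<and>
     (\<exists>r s. r \<in> carrier G \<and> involution G s \<and>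
            s \<otimes>\<^bsub>G\<^esub> r \<otimes>\<^bsub>G\<^esub> s = inv\<^bsub>G\<^esub> r \<and>
            generate G {r, s} = carrier G)"

definition sylow_subgroup :: "('a, 'b) monoid_scheme \<Rightarrow> nat \<Rightarrow> 'a set \<Rightarrow> bool" where
  "sylow_subgroup G p P \<longleftrightarrow> subgroup P G \<and> card P = p ^ multiplicity p (order G)"

end

theory Submission
  imports Defs
begin

lemma (in group) conj_nat_pow:
  assumes x: "x \<in> carrier G" and w: "w \<in> carrier G"
    and h: "x \<otimes> w = inv w \<otimes> x"
  shows "x \<otimes> w [^] (n::nat) = (inv w) [^] n \<otimes> x"
proof (induction n)
  case 0 then show ?case using x by simp
next
  case (Suc n)
  have "x \<otimes> w [^] Suc n = (x \<otimes> w [^] n) \<otimes> w"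
    using x w by (simp add: m_assoc)
  also have "\<dots> = (inv w) [^] n \<otimes> (x \<otimes> w)" using Suc x w by (simp add: m_assoc)
  also have "\<dots> = (inv w) [^] n \<otimes> inv w \<otimes> x" using h x w by (simp add: m_assoc)
  also have "\<dots> = (inv w) [^] Suc n \<otimes> x" by simp
  finally show ?case .
qed

lemma (in group) invol_conj_int:
  assumes x: "x \<in> carrier G" and y: "y \<in> carrier G"
    and xx: "x \<otimes> x = \<one>" and yy: "y \<otimes> y = \<one>"
  shows "x \<otimes> (x \<otimes> y) [^] (i::int) = (x \<otimes> y) [^] (-i) \<otimes> x"
proof -
  define z where "z = x \<otimes> y"
  have z: "z \<in> carrier G" using x y z_def by simp
  have ix: "inv x = x" using xx x by (simp add: inv_equality)
  have iy: "inv y = y" using yy y by (simp add: inv_equality)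
  have iz: "inv z = y \<otimes> x" using x y ix iy z_def by (simp add: inv_mult_group)
  have h1: "x \<otimes> z = inv z \<otimes> x"
  proof -
    have "x \<otimes> z = (x \<otimes> x) \<otimes> y" using x y z_def by (simp add: m_assoc)
    moreover have "inv z \<otimes> x = y \<otimes> (x \<otimes> x)" using x y iz by (simp add: m_assoc)
    ultimately show ?thesis using xx y by simp
  qed
  have h2: "x \<otimes> inv z = inv (inv z) \<otimes> x"
  proof -
    have "inv (inv z) = z" using z by simp
    moreover have "x \<otimes> inv z = z \<otimes> x" 
      using x y by (subst iz) (simp add: z_def m_assoc)
    ultimately show ?thesis by simp
  qed
  show ?thesis
  proof (cases i rule: int_cases2)
    case (nonneg n)
    have "x \<otimes> z [^] i = (inv z) [^] n \<otimes> x"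
      using conj_nat_pow[OF x z h1] nonneg by (simp add: int_pow_int)
    also have "\<dots> = z [^] (-i) \<otimes> x"
      using nonneg z by (simp add: nat_pow_inv int_pow_neg_int)
    finally show ?thesis using z_def by simp
  next
    case (nonpos n)
    have "x \<otimes> z [^] i = x \<otimes> (inv z) [^] n"
      using nonpos z by (simp add: nat_pow_inv int_pow_neg_int)
    also have "\<dots> = (inv (inv z)) [^] n \<otimes> x"
      using conj_nat_pow[OF x _ h2] z by simp
    also have "\<dots> = z [^] (-i) \<otimes> x"
      using nonpos z by (simp add: int_pow_int)
    finally show ?thesis using z_def by simp
  qed
qed


lemma (in group) invol_card:
  assumes fin: "finite (carrier G)"
    and x: "x \<in> carrier G" and y: "y \<in> carrier G"
    and xx: "x \<otimes> x = \<one>" and yy: "y \<otimes> y = \<one>"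
    and x1: "x \<noteq> \<one>" and y1: "y \<noteq> \<one>"
  shows "card (generate G {x, y}) = 2 * ord (x \<otimes> y)"
proof -
  define z where "z = x \<otimes> y"
  have z: "z \<in> carrier G" using x y z_def by simp
  have conj: "\<And>i. x \<otimes> z [^] (i::int) = z [^] (-i) \<otimes> x"
    using invol_conj_int[OF x y xx yy] z_def by simp
  have ix: "inv x = x" using xx x by (simp add: inv_equality)
  define A where "A = {z [^] (i::int) | i. True}"
  define B where "B = (\<lambda>g. g \<otimes> x) ` A"
  have Bd: "B = {z [^] (i::int) \<otimes> x | i. True}" unfolding B_def A_def by blast
  have yB: "y = z [^] (-1::int) \<otimes> x"
  proof -
    have "z [^] (-1::int) \<otimes> x = x \<otimes> z [^] (1::int)" using conj[of 1] by simp
    also have "\<dots> = (x \<otimes> x) \<otimes> y" using z x y by (simp add: z_def m_assoc)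
    finally show ?thesis using xx y by simp
  qed
  have sub: "subgroup (A \<union> B) G"
  proof (rule subgroupI)
    show "A \<union> B \<subseteq> carrier G" unfolding Bd A_def using z x by auto
    show "A \<union> B \<noteq> {}" unfolding A_def by auto
  next
    fix g assume "g \<in> A \<union> B"
    then consider i where "g = z [^] (i::int)" | i where "g = z [^] (i::int) \<otimes> x"
      unfolding Bd A_def by blast
    then show "inv g \<in> A \<union> B"
    proof cases
      case 1
      then have "inv g = z [^] (-i)" using z by (simp add: int_pow_neg)
      then show ?thesis unfolding A_def by blast
    next
      case 2
      then have "inv g = inv x \<otimes> inv (z [^] i)" using z x by (simp add: inv_mult_group)
      also have "\<dots> = x \<otimes> z [^] (-i)" using ix z by (simp add: int_pow_neg)
      also have "\<dots> = z [^] i \<otimes> x" using conj[of "-i"] by simp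
      finally show ?thesis unfolding Bd by blast
    qed
  next
    fix g h assume "g \<in> A \<union> B" "h \<in> A \<union> B"
    then consider i j where "g = z [^] (i::int)" "h = z [^] (j::int)"
      | i j where "g = z [^] (i::int)" "h = z [^] (j::int) \<otimes> x"
      | i j where "g = z [^] (i::int) \<otimes> x" "h = z [^] (j::int)"
      | i j where "g = z [^] (i::int) \<otimes> x" "h = z [^] (j::int) \<otimes> x"
      unfolding Bd A_def by blast
    then show "g \<otimes> h \<in> A \<union> B"
    proof cases
      case 1
      then have "g \<otimes> h = z [^] (i + j)" using z by (simp add: int_pow_mult)
      then show ?thesis unfolding A_def by blast
    next
      case 2
      then have "g \<otimes> h = z [^] (i + j) \<otimes> x" using z x by (simp add: int_pow_mult m_assoc)
      then show ?thesis unfolding Bd by blast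
    next
      case 3
      then have "g \<otimes> h = z [^] i \<otimes> (x \<otimes> z [^] j)" using z x by (simp add: m_assoc)
      also have "\<dots> = z [^] i \<otimes> z [^] (-j) \<otimes> x" using conj z x by (simp add: m_assoc)
      also have "\<dots> = z [^] (i + -j) \<otimes> x" using int_pow_mult[OF z, of i "-j"] by simp
      finally show ?thesis unfolding Bd by blast
    next
      case 4
      then have "g \<otimes> h = z [^] i \<otimes> (x \<otimes> z [^] j) \<otimes> x" using z x by (simp add: m_assoc)
      also have "\<dots> = z [^] i \<otimes> z [^] (-j) \<otimes> (x \<otimes> x)" using conj z x by (simp add: m_assoc)
      also have "\<dots> = z [^] (i + -j)" using z xx int_pow_mult[OF z, of i "-j"] by simp
      finally show ?thesis unfolding A_def by blast
    qed
  qed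
  have S: "generate G {x, y} = A \<union> B"
  proof
    have "x \<in> B" unfolding Bd using x by (auto intro!: exI[of _ 0])
    moreover have "y \<in> B" unfolding Bd using yB by blast
    ultimately show "generate G {x, y} \<subseteq> A \<union> B"
      by (intro generate_subgroup_incl sub) auto
  next
    have gs: "subgroup (generate G {x, y}) G" using x y by (intro generate_is_subgroup) auto
    have xg: "x \<in> generate G {x, y}" "y \<in> generate G {x, y}" by (auto intro: generate.incl)
    have zg: "z \<in> generate G {x, y}" unfolding z_def using subgroup.m_closed[OF gs xg(1) xg(2)] .
    have "A \<subseteq> generate G {x, y}" unfolding A_def using subgroup_int_pow_closed[OF gs zg] by blast
    moreover have "B \<subseteq> generate G {x, y}" unfolding B_def
    proof
      fix g assume "g \<in> (\<lambda>g. g \<otimes> x) ` A"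
      then obtain h where "h \<in> A" "g = h \<otimes> x" by blast
      then show "g \<in> generate G {x, y}" using subgroup.m_closed[OF gs _ xg(1)] \<open>A \<subseteq> _\<close> by blast
    qed
    ultimately show "A \<union> B \<subseteq> generate G {x, y}" by blast
  qed
  have disj: "A \<inter> B = {}"
  proof (rule ccontr)
    assume "A \<inter> B \<noteq> {}"
    then obtain i j where ij: "z [^] (i::int) = z [^] (j::int) \<otimes> x" unfolding Bd A_def by blast
    define k where "k = i - j"
    have xk: "x = z [^] k"
    proof -
      have "z [^] k = z [^] (-j) \<otimes> z [^] i" using z by (simp add: k_def int_pow_mult[symmetric])
      also have "\<dots> = z [^] (-j) \<otimes> (z [^] j \<otimes> x)" using ij by simp
      also have "\<dots> = x" using z x by (simp add: m_assoc[symmetric] int_pow_mult[symmetric])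
      finally show ?thesis by simp
    qed
    have d1: "\<not> int (ord z) dvd k" using x1 xk int_pow_eq_id[OF z, of k] by simp
    have yk: "y = z [^] (k + 1)"
    proof -
      have "y = (x \<otimes> x) \<otimes> y" using xx y by simp
      also have "\<dots> = x \<otimes> z" using x y by (simp add: z_def m_assoc)
      also have "\<dots> = z [^] (k + 1)" using xk z by (simp add: int_pow_mult)
      finally show ?thesis .
    qed
    have d2: "\<not> int (ord z) dvd (k + 1)" using y1 yk int_pow_eq_id[OF z, of "k+1"] by simp
    have "z [^] (k + 1) = z [^] (k - 1)"
    proof -
      have "z [^] (k + 1) = x \<otimes> z [^] (1::int)" using xk z by (simp add: int_pow_mult)
      also have "\<dots> = z [^] (-1::int) \<otimes> x" by (rule conj)
      also have "\<dots> = z [^] (k - 1)" using xk z by (simp add: int_pow_mult[symmetric])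
      finally show ?thesis .
    qed
    then have d3: "int (ord z) dvd 2" using int_pow_eq[OF z] by simp
    have "ord z \<noteq> 0" using d3 by (intro notI) simp
    moreover have "ord z \<le> 2" using d3 by (auto dest: zdvd_imp_le)
    ultimately have "ord z = 1 \<or> ord z = 2" by linarith
    then show False
    proof
      assume "ord z = 1" then show False using d1 by simp
    next
      assume "ord z = 2" then have "\<not> (2::int) dvd k" "\<not> (2::int) dvd (k + 1)" using d1 d2 by simp_all
      then show False by presburger
    qed
  qed
  have "A \<subseteq> carrier G" unfolding A_def using z by auto
  then have finA: "finite A" using fin by (rule finite_subset)
  have cA: "card A = ord z"
    using generate_pow_card[OF z] generate_pow[OF z] unfolding A_def by simp
  have "inj_on (\<lambda>g. g \<otimes> x) A" unfolding A_def using z x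
    by (auto intro!: inj_onI simp: r_cancel_one)
  then have cB: "card B = card A" unfolding B_def by (rule card_image)
  have "card (A \<union> B) = card A + card B"
    using disj finA B_def by (simp add: card_Un_disjoint)
  then show ?thesis using S cA cB z_def by simp
qed


lemma (in group) main_aux:
  assumes "involution G a" and "involution G b"
    and "generate G {a, b} = carrier G" and fin: "finite (carrier G)"
  shows "\<exists>c \<in> carrier G. sylow_subgroup G 2 (generate G {a, inv c \<otimes> b \<otimes> c})"
proof -
  have a: "a \<in> carrier G" "a \<noteq> \<one>" "a \<otimes> a = \<one>" using assms(1) unfolding involution_def by auto
  have b: "b \<in> carrier G" "b \<noteq> \<one>" "b \<otimes> b = \<one>" using assms(2) unfolding involution_def by auto
  define r where "r = a \<otimes> b"
  have r: "r \<in> carrier G" using a b r_def by simp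
  define n where "n = ord r"
  have ordG: "order G = 2 * n"
    using invol_card[OF fin a(1) b(1) a(3) b(3) a(2) b(2)] assms(3) r_def n_def
    by (simp add: order_def)
  have n1: "n \<ge> 1" using ord_ge_1[OF fin r] n_def by simp
  define k where "k = multiplicity (2::nat) n"
  define m where "m = n div 2 ^ k"
  have nm: "n = 2 ^ k * m" using multiplicity_dvd[of 2 n] unfolding m_def k_def using n1 by simp
  have modd: "\<not> 2 dvd m" using multiplicity_decompose[where p="2::nat" and x=n] unfolding m_def k_def using n1 by simp
  define j where "j = m div 2"
  have mj: "m = j + 1 + j" using modd unfolding j_def by presburger
  define c where "c = r [^] j"
  have c: "c \<in> carrier G" using r c_def by simp
  define b' where "b' = inv c \<otimes> b \<otimes> c"
  have b': "b' \<in> carrier G" using b c b'_def by simp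
  have ac: "a \<otimes> inv c = c \<otimes> a"
    using invol_conj_int[OF a(1) b(1) a(3) b(3), of "- int j"] r_def[symmetric] c_def r
    by (simp add: int_pow_neg_int int_pow_int)
  have ab': "a \<otimes> b' = r [^] m"
  proof -
    have "a \<otimes> b' = (a \<otimes> inv c) \<otimes> b \<otimes> c" using a b c b'_def by (simp add: m_assoc)
    also have "\<dots> = c \<otimes> r \<otimes> c" using ac a b c r_def by (simp add: m_assoc)
    also have "\<dots> = r [^] (Suc j) \<otimes> r [^] j" using r c_def by (simp add: nat_pow_Suc)
    also have "\<dots> = r [^] (j + 1 + j)" using nat_pow_mult[OF r, of "Suc j" j] by simp
    finally show ?thesis using mj by simp
  qed
  have b'1: "b' \<noteq> \<one>"
  proof
    assume "b' = \<one>"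
    then have "c \<otimes> b' = c" using c by simp
    moreover have "c \<otimes> b' = b \<otimes> c" using b c b'_def by (simp add: m_assoc[symmetric])
    ultimately have "b \<otimes> c = \<one> \<otimes> c" using c by simp
    then have "b = \<one>" using b c by (simp add: r_cancel_one)
    then show False using b by simp
  qed
  have b'b': "b' \<otimes> b' = \<one>"
  proof -
    have cc: "\<And>x. x \<in> carrier G \<Longrightarrow> c \<otimes> (inv c \<otimes> x) = x" using c by (simp add: m_assoc[symmetric])
    have bb: "\<And>x. x \<in> carrier G \<Longrightarrow> b \<otimes> (b \<otimes> x) = x" using b by (simp add: m_assoc[symmetric])
    show ?thesis using b c b'_def by (simp add: m_assoc cc bb)
  qed
  have cardH: "card (generate G {a, b'}) = 2 * ord (r [^] m)"
    using invol_card[OF fin a(1) b' a(3) b'b' a(2) b'1] ab' by simp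
  have m0: "m \<noteq> 0" using nm n1 by auto
  have "ord (r [^] m) = n div gcd n m" using ord_pow_gen[OF r, of m] m0 n_def by simp
  also have "\<dots> = 2 ^ k" using nm m0 by simp
  finally have ordrm: "ord (r [^] m) = 2 ^ k" .
  have mult: "multiplicity (2::nat) (order G) = Suc k"
    using ordG k_def multiplicity_times_same[where p="2::nat" and x=n] n1 by simp
  have "sylow_subgroup G 2 (generate G {a, b'})"
    unfolding sylow_subgroup_def
  proof
    show "subgroup (generate G {a, b'}) G" using a b' by (intro generate_is_subgroup) auto
    show "card (generate G {a, b'}) = 2 ^ multiplicity 2 (order G)"
      using cardH ordrm mult by simp
  qed
  then show ?thesis using c b'_def by blast
qed

theorem lemma2p2:
  fixes G :: "('a, 'b) monoid_scheme" and a b :: 'a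
  assumes "finite_dihedral_group G"
    and "involution G a" and "involution G b"
    and "generate G {a, b} = carrier G"
  shows "\<exists>c \<in> carrier G.
           sylow_subgroup G 2 (generate G {a, inv\<^bsub>G\<^esub> c \<otimes>\<^bsub>G\<^esub> b \<otimes>\<^bsub>G\<^esub> c})"
proof -
  from assms(1) have grp: "group G" and fin: "finite (carrier G)"
    unfolding finite_dihedral_group_def by auto
  show ?thesis using group.main_aux[OF grp assms(2,3,4) fin] .
qed

end
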